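(* (Symmetric sum formula) Let $\mathbf{k}=(k_1,\ldots,k_n)$ be a sequence of integers with all $k_i\ge2$. Then $$\sum_{\sigma\in S_n}\zeta^t(k_{\sigma(1)},\ldots,k_{\sigma(n)})=\sum_{\Pi=\{P_1,\ldots,P_i\}\in\mathcal{P}_n}c_\Pi(t)\prod_{j=1}^i\zeta\Big(\sum_{l\in P_j}k_l\Big).$$
   Context: For positive integers $k_1\ge2,k_2,\ldots,k_n$, $\zeta(k_1,\ldots,k_n)=\sum_{m_1>m_2>\cdots>m_n>0}m_1^{-k_1}\cdots m_n^{-k_n}$, and the interpolated multiple zeta value is the polynomial $\zeta^t(k_1,\ldots,k_n)=\sum_{\mathbf{p}}t^{n-\mathrm{dep}(\mathbf{p})}\zeta(\mathbf{p})\in\mathbb{R}[t]$, where $\mathbf{p}$ runs over the $2^{n-1}$ sequences $(k_1\,\square\,k_2\,\square\cdots\square\,k_n)$ obtained by replacing each $\square$ by either a comma or a plus sign, and $\mathrm{dep}(\mathbf{p})$ is the length of $\mathbf p$. $S_n$ is the symmetric group, $\mathcal{P}_n$ the set of set partitions of $\{1,\ldots,n\}$, $c_m(t)=(m-1)![t^m-(t-1)^m]$ for $m\ge1$, and $c_\Pi(t)=\prod_{j}c_{\#P_j}(t)$ for $\Pi=\{P_1,\ldots,P_i\}$. *)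

theory Defs
  imports "HOL-Analysis.Analysis" "HOL-Combinatorics.Permutations" "HOL-Library.Disjoint_Sets"
begin

definition mzv :: "nat list \<Rightarrow> real" where
  "mzv ks = infsum (\<lambda>ms. \<Prod>i<length ks. 1 / real (ms ! i) ^ (ks ! i))
     {ms. length ms = length ks \<and> sorted_wrt (>) ms \<and> (\<forall>m\<in>set ms. m > 0)}"

fun add_hd :: "nat \<Rightarrow> nat list \<Rightarrow> nat list" where
  "add_hd k [] = [k]"
| "add_hd k (x # xs) = (k + x) # xs"

text \<open>All 2^(n-1) sequences (k_1 [] k_2 [] ... [] k_n), each box a comma or a plus.\<close>
fun merges :: "nat list \<Rightarrow> nat list list" where
  "merges [] = [[]]"
| "merges [k] = [[k]]"
| "merges (k # l # rest) =
     map ((#) k) (merges (l # rest)) @ map (add_hd k) (merges (l # rest))"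

definition zeta_t :: "real \<Rightarrow> nat list \<Rightarrow> real" where
  "zeta_t t ks = (\<Sum>p \<leftarrow> merges ks. t ^ (length ks - length p) * mzv p)"

definition c_coef :: "nat \<Rightarrow> real \<Rightarrow> real" where
  "c_coef m t = fact (m - 1) * (t ^ m - (t - 1) ^ m)"

end

theory Submission
  imports Defs "HOL-Combinatorics.Multiset_Permutations"
begin

definition wt :: "nat list \<Rightarrow> nat list \<Rightarrow> real" where
  "wt ks ms = (\<Prod>i<length ks. 1 / real (ms ! i) ^ (ks ! i))"

definition SA :: "nat \<Rightarrow> nat \<Rightarrow> nat list set" where
  "SA h n = {ms. length ms = n \<and> sorted_wrt (>) ms \<and> (\<forall>m\<in>set ms. 0 < m \<and> m < h)}"

definition SW :: "nat \<Rightarrow> nat \<Rightarrow> nat list set" where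
  "SW h n = {ms. length ms = n \<and> sorted_wrt (\<ge>) ms \<and> (\<forall>m\<in>set ms. 0 < m \<and> m < h)}"

definition TS :: "nat \<Rightarrow> nat list \<Rightarrow> real" where
  "TS h p = (\<Sum>ms\<in>SA h (length p). wt p ms)"

definition ZW :: "real \<Rightarrow> nat \<Rightarrow> nat list \<Rightarrow> real" where
  "ZW t h ks = (\<Sum>ms\<in>SW h (length ks). t ^ (length ks - card (set ms)) * wt ks ms)"

lemma finite_SA: "finite (SA h n)"
proof -
  have "SA h n \<subseteq> {ms. set ms \<subseteq> {0..<h} \<and> length ms = n}" by (auto simp: SA_def)
  thus ?thesis by (rule finite_subset) (rule finite_lists_length_eq, simp)
qed

lemma finite_SW: "finite (SW h n)"
proof -
  have "SW h n \<subseteq> {ms. set ms \<subseteq> {0..<h} \<and> length ms = n}" by (auto simp: SW_def)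
  thus ?thesis by (rule finite_subset) (rule finite_lists_length_eq, simp)
qed

lemma wt_Cons: "wt (k # p) (m # ms) = 1 / real m ^ k * wt p ms"
  unfolding wt_def length_Cons prod.lessThan_Suc_shift by simp

lemma SA_0: "SA h 0 = {[]}" by (auto simp: SA_def)
lemma SW_0: "SW h 0 = {[]}" by (auto simp: SW_def)

lemma SA_Suc: "SA h (Suc n) = (\<lambda>(m,ms). m # ms) ` (SIGMA m:{0<..<h}. SA m n)"
proof (intro equalityI subsetI)
  fix xs assume "xs \<in> SA h (Suc n)"
  then obtain m ms where xs: "xs = m # ms" unfolding SA_def by (cases xs) auto
  show "xs \<in> (\<lambda>(m,ms). m # ms) ` (SIGMA m:{0<..<h}. SA m n)"
    using \<open>xs \<in> SA h (Suc n)\<close> unfolding xs SA_def by (auto intro!: image_eqI[of _ _ "(m,ms)"])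
next
  fix xs assume "xs \<in> (\<lambda>(m,ms). m # ms) ` (SIGMA m:{0<..<h}. SA m n)"
  thus "xs \<in> SA h (Suc n)" unfolding SA_def by (auto, meson less_trans)
qed

lemma TS_Nil: "TS h [] = 1"
  by (simp add: TS_def SA_0 wt_def)

lemma TS_Cons: "TS h (k # p) = (\<Sum>m\<in>{0<..<h}. 1 / real m ^ k * TS m p)"
proof -
  have inj: "inj_on (\<lambda>(m,ms). m # ms) (SIGMA m:{0<..<h}. SA m (length p))"
    by (auto simp: inj_on_def)
  have "TS h (k # p) = sum (wt (k # p) \<circ> (\<lambda>(m,ms). m # ms)) (SIGMA m:{0<..<h}. SA m (length p))"
    unfolding TS_def length_Cons SA_Suc by (rule sum.reindex[OF inj])
  also have "\<dots> = (\<Sum>(m,ms)\<in>(SIGMA m:{0<..<h}. SA m (length p)). 1 / real m ^ k * wt p ms)"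
    by (intro sum.cong) (auto simp: wt_Cons)
  also have "\<dots> = (\<Sum>m\<in>{0<..<h}. \<Sum>ms\<in>SA m (length p). 1 / real m ^ k * wt p ms)"
    by (subst sum.Sigma) (auto simp: finite_SA)
  also have "\<dots> = (\<Sum>m\<in>{0<..<h}. 1 / real m ^ k * TS m p)"
    by (simp add: TS_def sum_distrib_left)
  finally show ?thesis .
qed

lemma SW_Suc_Suc: "SW h (Suc (Suc n)) =
   (\<lambda>(m,ms). m # ms) ` (SIGMA m:{0<..<h}. SW m (Suc n)) \<union> (\<lambda>ms. hd ms # ms) ` SW h (Suc n)"
proof (intro equalityI subsetI)
  fix xs assume xs0: "xs \<in> SW h (Suc (Suc n))"
  then obtain m m' ms where xs: "xs = m # m' # ms" unfolding SW_def
    by (cases xs; cases "tl xs") auto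
  show "xs \<in> (\<lambda>(m,ms). m # ms) ` (SIGMA m:{0<..<h}. SW m (Suc n)) \<union> (\<lambda>ms. hd ms # ms) ` SW h (Suc n)"
  proof (cases "m = m'")
    case True
    thus ?thesis using xs0 unfolding xs SW_def by (auto intro!: image_eqI[of _ _ "m' # ms"])
  next
    case False
    hence "m > m'" using xs0 unfolding xs SW_def by auto
    thus ?thesis using xs0 unfolding xs SW_def by (force intro!: image_eqI[of _ _ "(m, m' # ms)"])
  qed
next
  fix xs assume "xs \<in> (\<lambda>(m,ms). m # ms) ` (SIGMA m:{0<..<h}. SW m (Suc n)) \<union> (\<lambda>ms. hd ms # ms) ` SW h (Suc n)"
  then consider (a) m ms where "m\<in>{0<..<h}" "ms \<in> SW m (Suc n)" "xs = m # ms"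
    | (b) ms where "ms \<in> SW h (Suc n)" "xs = hd ms # ms" by auto
  thus "xs \<in> SW h (Suc (Suc n))"
  proof cases
    case a
    thus ?thesis unfolding SW_def by (auto; meson less_trans less_imp_le)
  next
    case b
    then obtain y ys where "ms = y # ys" unfolding SW_def by (cases ms) auto
    thus ?thesis using b unfolding SW_def by auto
  qed
qed

lemma ZW_Cons_Cons:
  "ZW t h (k # l # rest) = (\<Sum>m\<in>{0<..<h}. 1 / real m ^ k * ZW t m (l # rest)) + t * ZW t h ((k + l) # rest)"
proof -
  let ?n = "length rest"
  let ?f = "\<lambda>ks ms. t ^ (length ks - card (set ms)) * wt ks ms"
  let ?A = "(\<lambda>(m,ms). m # ms) ` (SIGMA m:{0<..<h}. SW m (Suc ?n))"
  let ?B = "(\<lambda>ms. hd ms # ms) ` SW h (Suc ?n)"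
  have finA: "finite ?A" by (auto intro!: finite_SigmaI finite_imageI finite_SW)
  have finB: "finite ?B" by (auto intro!: finite_imageI finite_SW)
  have disj: "?A \<inter> ?B = {}"
    by (auto simp: SW_def) (metis list.sel(1) list.set_intros(1) list.size(3) nat.distinct(1) nat_less_le neq_Nil_conv)
  have "ZW t h (k # l # rest) = sum (?f (k # l # rest)) ?A + sum (?f (k # l # rest)) ?B"
    unfolding ZW_def by (simp only: length_Cons SW_Suc_Suc, rule sum.union_disjoint[OF finA finB disj])
  also have "sum (?f (k # l # rest)) ?A = (\<Sum>m\<in>{0<..<h}. 1 / real m ^ k * ZW t m (l # rest))"
  proof -
    have inj: "inj_on (\<lambda>(m,ms). m # ms) (SIGMA m:{0<..<h}. SW m (Suc ?n))"
      by (auto simp: inj_on_def)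
    have "sum (?f (k # l # rest)) ?A = sum (?f (k # l # rest) \<circ> (\<lambda>(m,ms). m # ms)) (SIGMA m:{0<..<h}. SW m (Suc ?n))"
      by (rule sum.reindex[OF inj])
    also have "\<dots> = (\<Sum>(m,ms)\<in>(SIGMA m:{0<..<h}. SW m (Suc ?n)). 1 / real m ^ k * ?f (l # rest) ms)"
    proof (intro sum.cong refl, clarify)
      fix m ms assume "ms \<in> SW m (Suc ?n)"
      hence "m \<notin> set ms" "length ms = Suc ?n" by (auto simp: SW_def)
      hence "card (set (m # ms)) = Suc (card (set ms))" by simp
      thus "(?f (k # l # rest) \<circ> (\<lambda>(m,ms). m # ms)) (m, ms) = 1 / real m ^ k * ?f (l # rest) ms"
        by (simp add: wt_Cons)
    qed
    also have "\<dots> = (\<Sum>m\<in>{0<..<h}. \<Sum>ms\<in>SW m (Suc ?n). 1 / real m ^ k * ?f (l # rest) ms)"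
      by (subst sum.Sigma) (auto simp: finite_SW)
    also have "\<dots> = (\<Sum>m\<in>{0<..<h}. 1 / real m ^ k * ZW t m (l # rest))"
      by (simp add: ZW_def sum_distrib_left)
    finally show ?thesis .
  qed
  also have "sum (?f (k # l # rest)) ?B = t * ZW t h ((k + l) # rest)"
  proof -
    have inj: "inj_on (\<lambda>ms. hd ms # ms) (SW h (Suc ?n))"
      by (auto simp: inj_on_def)
    have "sum (?f (k # l # rest)) ?B = sum (?f (k # l # rest) \<circ> (\<lambda>ms. hd ms # ms)) (SW h (Suc ?n))"
      by (rule sum.reindex[OF inj])
    also have "\<dots> = (\<Sum>ms\<in>SW h (Suc ?n). t * ?f ((k + l) # rest) ms)"
    proof (intro sum.cong refl)
      fix ms assume "ms \<in> SW h (Suc ?n)"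
      then obtain y ys where ms: "ms = y # ys" "length ys = ?n" by (cases ms) (auto simp: SW_def)
      have c: "card (set ms) \<le> Suc ?n" using card_length[of ms] ms by simp
      have "Suc (Suc ?n) - card (set ms) = Suc (Suc ?n - card (set ms))" using c by simp
      thus "(?f (k # l # rest) \<circ> (\<lambda>ms. hd ms # ms)) ms = t * ?f ((k + l) # rest) ms"
        using ms by (simp add: wt_Cons power_add)
    qed
    also have "\<dots> = t * ZW t h ((k + l) # rest)"
      by (simp add: ZW_def sum_distrib_left)
    finally show ?thesis .
  qed
  finally show ?thesis .
qed

lemma add_hd_add_hd: "add_hd k (add_hd k' p) = add_hd (k + k') p"
  by (cases p) auto

lemma merges_add_hd: "ks \<noteq> [] \<Longrightarrow> merges (add_hd k ks) = map (add_hd k) (merges ks)"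
proof (induction ks rule: merges.induct)
  case (3 k' l rest)
  show ?case by (simp add: add_hd_add_hd comp_def add.assoc)
qed auto

lemma length_add_hd: "p \<noteq> [] \<Longrightarrow> length (add_hd k p) = length p"
  by (cases p) auto

lemma add_hd_not_Nil [simp]: "add_hd k p \<noteq> []"
  by (cases p) auto

lemma add_hd_not_Nil2 [simp]: "[] \<noteq> add_hd k p"
  by (cases p) auto

lemma length_add_hd_le [simp]: "length (add_hd k p) \<le> Suc (length p)"
  by (cases p) auto

lemma merges_length_le: "p \<in> set (merges ks) \<Longrightarrow> length p \<le> length ks"
proof (induction ks arbitrary: p rule: merges.induct)
  case (3 k l rest)
  have L: "length (k # l # rest) = Suc (Suc (length rest))" by simp
  from 3(3) consider q where "q \<in> set (merges (l # rest))" "p = k # q"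
    | q where "q \<in> set (merges (l # rest))" "p = add_hd k q" by auto
  then show ?case
  proof cases
    case 1
    have "length q \<le> Suc (length rest)" using 3(2)[OF 1(1)] by simp
    thus ?thesis unfolding 1(2) L by simp
  next
    case 2
    have a: "length (add_hd k q) \<le> Suc (length q)" by (rule length_add_hd_le)
    have b: "length q \<le> Suc (length rest)" using 3(1)[OF 2(1)] by simp
    show ?thesis unfolding 2(2) L using a b by linarith
  qed
qed auto

lemma merges_nonempty: "p \<in> set (merges ks) \<Longrightarrow> ks \<noteq> [] \<Longrightarrow> p \<noteq> []"
proof (induction ks arbitrary: p rule: merges.induct)
  case (3 k l rest)
  from 3(3) consider q where "p = k # q" | q where "p = add_hd k q" by auto
  thus ?case by cases auto
qed auto

lemma merges_length: assumes "p \<in> set (merges ks)" shows "length p \<le> length ks \<and> (ks \<noteq> [] \<longrightarrow> p \<noteq> [])"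
  using merges_length_le[OF assms] merges_nonempty[OF assms] by simp

lemma merges_ge2: "p \<in> set (merges ks) \<Longrightarrow> \<forall>k\<in>set ks. k \<ge> 2 \<Longrightarrow> \<forall>x\<in>set p. x \<ge> 2"
proof (induction ks arbitrary: p rule: merges.induct)
  case (3 k l rest)
  from 3(3) consider q where "q \<in> set (merges (l # rest))" "p = k # q"
    | q where "q \<in> set (merges (l # rest))" "p = add_hd k q" by auto
  then show ?case
  proof cases
    case 1
    have "\<forall>x\<in>set q. x \<ge> 2" using 3(2)[OF 1(1)] 3(4) by simp
    thus ?thesis using 1(2) 3(4) by simp
  next
    case 2
    have "\<forall>x\<in>set q. x \<ge> 2" using 3(1)[OF 2(1)] 3(4) by simp
    thus ?thesis using 2(2) 3(4) by (cases q) auto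
  qed
qed auto

lemma sum_list_sum_swap:
  "sum_list (map (\<lambda>p. \<Sum>m\<in>A. g m p) xs) = (\<Sum>m\<in>A. sum_list (map (g m) xs))"
  by (induction xs) (auto simp: sum.distrib)

lemma sum_list_cmult: "sum_list (map (\<lambda>p. c * f p) xs) = (c::real) * sum_list (map f xs)"
  by (rule sum_list_const_mult)

lemma zeta_trunc:
  "(\<Sum>p\<leftarrow>merges ks. t ^ (length ks - length p) * TS h p) = ZW t h ks"
proof (induction "length ks" arbitrary: ks h rule: less_induct)
  case less
  show ?case
  proof (cases ks rule: merges.cases)
    case 1
    thus ?thesis by (simp add: ZW_def SW_0 TS_Nil wt_def)
  next
    case (2 k)
    have e: "SA h (length [k]) = SW h (length [k])" unfolding SA_def SW_def by (auto simp: length_Suc_conv)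
    have "TS h [k] = ZW t h [k]"
      unfolding TS_def ZW_def e by (intro sum.cong) (auto simp: SW_def length_Suc_conv)
    thus ?thesis using 2 by simp
  next
    case (3 k l rest)
    let ?n = "length rest"
    let ?M = "merges (l # rest)"
    have lenM: "length p \<le> Suc ?n \<and> p \<noteq> []" if "p \<in> set ?M" for p
      using merges_length[OF that] by simp
    have "(\<Sum>p\<leftarrow>merges ks. t ^ (length ks - length p) * TS h p)
       = (\<Sum>p\<leftarrow>?M. t ^ (Suc (Suc ?n) - length (k # p)) * TS h (k # p))
         + (\<Sum>p\<leftarrow>?M. t ^ (Suc (Suc ?n) - length (add_hd k p)) * TS h (add_hd k p))"
      using 3 by (simp only: merges.simps map_append sum_list_append map_map comp_def length_Cons)
    also have "(\<Sum>p\<leftarrow>?M. t ^ (Suc (Suc ?n) - length (k # p)) * TS h (k # p))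
       = (\<Sum>p\<leftarrow>?M. \<Sum>m\<in>{0<..<h}. 1 / real m ^ k * (t ^ (length (l # rest) - length p) * TS m p))"
      by (intro arg_cong[where f=sum_list] map_cong refl) (simp add: TS_Cons sum_distrib_left mult.left_commute)
    also have "\<dots> = (\<Sum>m\<in>{0<..<h}. 1 / real m ^ k * ZW t m (l # rest))"
      unfolding sum_list_sum_swap sum_list_cmult using less(1)[of "l # rest"] 3 by simp
    also have "(\<Sum>p\<leftarrow>?M. t ^ (Suc (Suc ?n) - length (add_hd k p)) * TS h (add_hd k p))
       = (\<Sum>p\<leftarrow>?M. t * (t ^ (length ((k + l) # rest) - length (add_hd k p)) * TS h (add_hd k p)))"
    proof (intro arg_cong[where f=sum_list] map_cong refl)
      fix p assume "p \<in> set ?M"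
      hence "length p \<le> Suc ?n" "p \<noteq> []" using lenM by auto
      thus "t ^ (Suc (Suc ?n) - length (add_hd k p)) * TS h (add_hd k p)
          = t * (t ^ (length ((k + l) # rest) - length (add_hd k p)) * TS h (add_hd k p))"
        by (simp add: length_add_hd Suc_diff_le)
    qed
    also have "\<dots> = t * (\<Sum>q\<leftarrow>merges ((k + l) # rest). t ^ (length ((k + l) # rest) - length q) * TS h q)"
      using merges_add_hd[of "l # rest" k] by (simp add: sum_list_cmult comp_def)
    also have "\<dots> = t * ZW t h ((k + l) # rest)"
      using less(1)[of "(k + l) # rest"] 3 by simp
    also have "(\<Sum>m\<in>{0<..<h}. 1 / real m ^ k * ZW t m (l # rest)) + t * ZW t h ((k + l) # rest) = ZW t h ks"
      by (simp only: 3 ZW_Cons_Cons)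
    finally show ?thesis .
  qed
qed

lemma wt_nonneg: "wt p ms \<ge> 0"
  unfolding wt_def by (intro prod_nonneg) auto

lemma TS_nonneg: "TS h p \<ge> 0"
  unfolding TS_def by (intro sum_nonneg wt_nonneg)

lemma inv_sq_sum: "n \<ge> 1 \<Longrightarrow> (\<Sum>m\<in>{0<..<Suc n}. 1 / real m ^ 2) \<le> 2 - 1 / real n"
proof (induction n rule: dec_induct)
  case base
  have "{0<..<Suc 1} = {1::nat}" by auto
  thus ?case by simp
next
  case (step n)
  have "(\<Sum>m\<in>{0<..<Suc (Suc n)}. 1 / real m ^ 2) = (\<Sum>m\<in>{0<..<Suc n}. 1 / real m ^ 2) + 1 / real (Suc n) ^ 2"
  proof -
    have e: "{0<..<Suc (Suc n)} = insert (Suc n) {0<..<Suc n}" by auto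
    show ?thesis unfolding e by (subst sum.insert) auto
  qed
  also have "\<dots> \<le> 2 - 1 / real n + 1 / real (Suc n) ^ 2" using step by simp
  also have "\<dots> \<le> 2 - 1 / real (Suc n)"
  proof -
    have n: "real n \<ge> 1" using step by simp
    have eq: "1 / real n - 1 / real (Suc n) = 1 / (real n * real (Suc n))"
      using n by (simp add: field_simps)
    have le: "real n * real (Suc n) \<le> real (Suc n) ^ 2"
      by (simp add: power2_eq_square)
    have "1 / real (Suc n) ^ 2 \<le> 1 / (real n * real (Suc n))"
      using n le by (intro divide_left_mono) auto
    hence "1 / real (Suc n) ^ 2 \<le> 1 / real n - 1 / real (Suc n)" using eq by simp
    thus ?thesis by simp
  qed
  finally show ?case .
qed

lemma inv_pow_sum_le2:
  assumes "k \<ge> 2" shows "(\<Sum>m\<in>{0<..<h}. 1 / real m ^ k) \<le> 2"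
proof -
  have "(\<Sum>m\<in>{0<..<h}. 1 / real m ^ k) \<le> (\<Sum>m\<in>{0<..<h}. 1 / real m ^ 2)"
  proof (intro sum_mono)
    fix m assume "m \<in> {0<..<h}"
    hence m: "real m \<ge> 1" by simp
    have "real m ^ 2 \<le> real m ^ k" using m assms by (intro power_increasing) auto
    thus "1 / real m ^ k \<le> 1 / real m ^ 2"
      using m by (intro divide_left_mono) auto
  qed
  also have "\<dots> \<le> 2"
  proof (cases h)
    case 0 thus ?thesis by simp
  next
    case (Suc n)
    show ?thesis
    proof (cases "n = 0")
      case True thus ?thesis using Suc by simp
    next
      case False
      hence "(\<Sum>m\<in>{0<..<Suc n}. 1 / real m ^ 2) \<le> 2 - 1 / real n" by (intro inv_sq_sum) auto
      also have "\<dots> \<le> 2" by simp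
      finally show ?thesis using Suc by simp
    qed
  qed
  finally show ?thesis .
qed

lemma TS_bound: "\<forall>x\<in>set p. x \<ge> 2 \<Longrightarrow> TS h p \<le> 2 ^ length p"
proof (induction p arbitrary: h)
  case Nil thus ?case by (simp add: TS_Nil)
next
  case (Cons k p)
  have "TS h (k # p) = (\<Sum>m\<in>{0<..<h}. 1 / real m ^ k * TS m p)" by (rule TS_Cons)
  also have "\<dots> \<le> (\<Sum>m\<in>{0<..<h}. 1 / real m ^ k * 2 ^ length p)"
    using Cons by (intro sum_mono mult_left_mono) auto
  also have "\<dots> = (\<Sum>m\<in>{0<..<h}. 1 / real m ^ k) * 2 ^ length p"
    by (simp add: sum_distrib_right)
  also have "\<dots> \<le> 2 * 2 ^ length p"
    using Cons inv_pow_sum_le2[of k h] by (intro mult_right_mono) auto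
  finally show ?case by simp
qed

definition Aset :: "nat \<Rightarrow> nat list set" where
  "Aset n = {ms. length ms = n \<and> sorted_wrt (>) ms \<and> (\<forall>m\<in>set ms. m > 0)}"

lemma mzv_Aset: "mzv p = infsum (wt p) (Aset (length p))"
  unfolding mzv_def Aset_def wt_def by simp

lemma SA_sub_Aset: "SA h n \<subseteq> Aset n"
  unfolding SA_def Aset_def by auto

lemma finite_sub_SA:
  assumes "finite X" "X \<subseteq> Aset n"
  shows "\<exists>M. \<forall>N\<ge>M. X \<subseteq> SA (Suc N) n"
proof -
  define M where "M = Max (insert 0 (\<Union>ms\<in>X. set ms))"
  have fin: "finite (insert 0 (\<Union>ms\<in>X. set ms))" using assms(1) by auto
  have "X \<subseteq> SA (Suc N) n" if "N \<ge> M" for N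
  proof
    fix ms assume "ms \<in> X"
    hence "\<forall>m\<in>set ms. m \<le> M" unfolding M_def using fin by (auto intro: Max_ge)
    thus "ms \<in> SA (Suc N) n" using \<open>ms \<in> X\<close> assms(2) that unfolding SA_def Aset_def by fastforce
  qed
  thus ?thesis by blast
qed

lemma mzv_trunc:
  assumes "\<forall>x\<in>set p. x \<ge> 2"
  shows "(\<lambda>N. TS (Suc N) p) \<longlonglongrightarrow> mzv p"
proof -
  let ?A = "Aset (length p)"
  have summ: "wt p summable_on ?A"
  proof (rule nonneg_bdd_above_summable_on)
    show "\<And>x. x \<in> ?A \<Longrightarrow> 0 \<le> wt p x" by (rule wt_nonneg)
    show "bdd_above (sum (wt p) ` {F. F \<subseteq> ?A \<and> finite F})"
    proof (rule bdd_aboveI2)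
      fix F assume F: "F \<in> {F. F \<subseteq> ?A \<and> finite F}"
      then obtain M where "\<forall>N\<ge>M. F \<subseteq> SA (Suc N) (length p)" using finite_sub_SA by blast
      hence sub: "F \<subseteq> SA (Suc M) (length p)" by blast
      have "sum (wt p) F \<le> sum (wt p) (SA (Suc M) (length p))"
        by (intro sum_mono2 finite_SA sub wt_nonneg)
      also have "\<dots> = TS (Suc M) p" by (simp add: TS_def)
      also have "\<dots> \<le> 2 ^ length p" using TS_bound assms by blast
      finally show "sum (wt p) F \<le> 2 ^ length p" .
    qed
  qed
  hence "(wt p has_sum mzv p) ?A" unfolding mzv_Aset by (rule has_sum_infsum)
  hence lim: "(sum (wt p) \<longlongrightarrow> mzv p) (finite_subsets_at_top ?A)" by (simp add: has_sum_def)
  have fl: "filterlim (\<lambda>N. SA (Suc N) (length p)) (finite_subsets_at_top ?A) sequentially"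
    unfolding filterlim_finite_subsets_at_top
  proof (intro allI impI)
    fix X assume X: "finite X \<and> X \<subseteq> ?A"
    then obtain M where M: "\<forall>N\<ge>M. X \<subseteq> SA (Suc N) (length p)" using finite_sub_SA by blast
    show "\<forall>\<^sub>F N in sequentially. finite (SA (Suc N) (length p)) \<and> X \<subseteq> SA (Suc N) (length p) \<and> SA (Suc N) (length p) \<subseteq> ?A"
      using M by (intro eventually_sequentiallyI[of M]) (auto simp: finite_SA SA_sub_Aset)
  qed
  have "((\<lambda>N. sum (wt p) (SA (Suc N) (length p))) \<longlongrightarrow> mzv p) sequentially"
    by (rule filterlim_compose[OF lim fl])
  thus ?thesis by (simp add: TS_def)
qed

lemma permute_list_inv_cancel:
  assumes "\<sigma> permutes {..<length xs}"
  shows "permute_list (inv \<sigma>) (permute_list \<sigma> xs) = xs"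
proof -
  have "permute_list (inv \<sigma>) (permute_list \<sigma> xs) = permute_list (\<sigma> \<circ> inv \<sigma>) xs"
    using permutes_inv[OF assms] by (simp add: permute_list_compose)
  also have "\<sigma> \<circ> inv \<sigma> = id" using permutes_inv_o(1)[OF assms] .
  finally show ?thesis by simp
qed

lemma permute_list_cancel_inv:
  assumes "\<sigma> permutes {..<length xs}"
  shows "permute_list \<sigma> (permute_list (inv \<sigma>) xs) = xs"
proof -
  have "permute_list \<sigma> (permute_list (inv \<sigma>) xs) = permute_list (inv \<sigma> \<circ> \<sigma>) xs"
    using assms by (simp add: permute_list_compose)
  also have "inv \<sigma> \<circ> \<sigma> = id" using permutes_inv_o(2)[OF assms] .
  finally show ?thesis by simp
qed

lemma stab_card_eq:
  fixes f ys :: "'a list"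
  assumes "mset ys = mset f"
  shows "card {\<sigma>. \<sigma> permutes {..<length f} \<and> permute_list \<sigma> f = ys}
       = card {\<tau>. \<tau> permutes {..<length f} \<and> permute_list \<tau> f = f}"
proof -
  let ?S = "{..<length f}"
  obtain s0 where s0: "s0 permutes ?S" "permute_list s0 f = ys"
    using mset_eq_permutation[OF assms] by blast
  have s0i: "inv s0 permutes ?S" using permutes_inv[OF s0(1)] .
  have "bij_betw (\<lambda>\<tau>. \<tau> \<circ> s0) {\<tau>. \<tau> permutes ?S \<and> permute_list \<tau> f = f}
           {\<sigma>. \<sigma> permutes ?S \<and> permute_list \<sigma> f = ys}"
  proof (rule bij_betw_byWitness[where f'="\<lambda>\<sigma>. \<sigma> \<circ> inv s0"])
    show "\<forall>a\<in>{\<tau>. \<tau> permutes ?S \<and> permute_list \<tau> f = f}. a \<circ> s0 \<circ> inv s0 = a"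
      using permutes_inv_o(1)[OF s0(1)] by (simp add: o_assoc[symmetric])
    show "\<forall>a\<in>{\<sigma>. \<sigma> permutes ?S \<and> permute_list \<sigma> f = ys}. a \<circ> inv s0 \<circ> s0 = a"
      using permutes_inv_o(2)[OF s0(1)] by (simp add: o_assoc[symmetric])
    show "(\<lambda>\<tau>. \<tau> \<circ> s0) ` {\<tau>. \<tau> permutes ?S \<and> permute_list \<tau> f = f} \<subseteq> {\<sigma>. \<sigma> permutes ?S \<and> permute_list \<sigma> f = ys}"
    proof (rule image_subsetI)
      fix \<tau> assume "\<tau> \<in> {\<tau>. \<tau> permutes ?S \<and> permute_list \<tau> f = f}"
      hence "\<tau> permutes ?S" "permute_list \<tau> f = f" by auto
      thus "\<tau> \<circ> s0 \<in> {\<sigma>. \<sigma> permutes ?S \<and> permute_list \<sigma> f = ys}"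
        using s0 by (simp add: permutes_compose permute_list_compose)
    qed
    show "(\<lambda>\<sigma>. \<sigma> \<circ> inv s0) ` {\<sigma>. \<sigma> permutes ?S \<and> permute_list \<sigma> f = ys} \<subseteq> {\<tau>. \<tau> permutes ?S \<and> permute_list \<tau> f = f}"
    proof (rule image_subsetI)
      fix \<sigma> assume "\<sigma> \<in> {\<sigma>. \<sigma> permutes ?S \<and> permute_list \<sigma> f = ys}"
      hence "\<sigma> permutes ?S" "permute_list \<sigma> f = ys" by auto
      thus "\<sigma> \<circ> inv s0 \<in> {\<tau>. \<tau> permutes ?S \<and> permute_list \<tau> f = f}"
        using s0 s0i permute_list_inv_cancel[of s0 f]
        by (simp add: permutes_compose permute_list_compose)
    qed
  qed
  thus ?thesis by (simp add: bij_betw_same_card)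
qed

lemma stab_card:
  fixes f :: "'a list"
  shows "card {\<tau>. \<tau> permutes {..<length f} \<and> permute_list \<tau> f = f} = (\<Prod>x\<in>set f. fact (count (mset f) x))"
proof -
  let ?S = "{..<length f}"
  let ?P = "{\<sigma>. \<sigma> permutes ?S}"
  let ?T = "permutations_of_multiset (mset f)"
  let ?st = "card {\<tau>. \<tau> permutes ?S \<and> permute_list \<tau> f = f}"
  have finP: "finite ?P" by (rule finite_permutations) simp
  have finT: "finite ?T" by (rule finite_permutations_of_multiset)
  have img: "(\<lambda>\<sigma>. permute_list \<sigma> f) ` ?P \<subseteq> ?T"
    by (auto simp: permutations_of_multiset_def)
  have "fact (length f) = card ?P" by (simp add: card_permutations)
  also have "card ?P = (\<Sum>ys\<in>?T. card {\<sigma>\<in>?P. permute_list \<sigma> f = ys})"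
    using sum.group[OF finP finT img, of "\<lambda>_. 1::nat"] by simp
  also have "\<dots> = (\<Sum>ys\<in>?T. ?st)"
  proof (intro sum.cong refl)
    fix ys assume "ys \<in> ?T"
    hence "mset ys = mset f" by (simp add: permutations_of_multiset_def)
    thus "card {\<sigma>\<in>?P. permute_list \<sigma> f = ys} = ?st" using stab_card_eq[of ys f] by simp
  qed
  also have "\<dots> = card ?T * ?st" by simp
  finally have A: "fact (length f) = card ?T * ?st" .
  have B: "card ?T * (\<Prod>x\<in>set f. fact (count (mset f) x)) = fact (length f)"
    using card_permutations_of_multiset_aux[of "mset f"] by simp
  have "card ?T > 0"
  proof -
    have "f \<in> ?T" by (simp add: permutations_of_multiset_def)
    thus ?thesis using finT card_gt_0_iff by blast
  qed
  thus ?thesis using A B by (metis mult_left_cancel neq0_conv)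
qed

lemma sorted_desc_unique:
  fixes ys f :: "nat list"
  assumes "sorted_wrt (\<ge>) ys" "mset ys = mset f"
  shows "ys = rev (sort f)"
proof -
  have "sorted (rev ys)" using assms(1) by (simp add: sorted_wrt_rev)
  hence "sort f = rev ys" using assms(2) by (intro properties_for_sort) simp_all
  thus ?thesis by simp
qed

lemma sort_card:
  fixes f :: "nat list"
  shows "card {\<sigma>. \<sigma> permutes {..<length f} \<and> sorted_wrt (\<ge>) (permute_list \<sigma> f)}
       = (\<Prod>x\<in>set f. fact (count (mset f) x))"
proof -
  have "{\<sigma>. \<sigma> permutes {..<length f} \<and> sorted_wrt (\<ge>) (permute_list \<sigma> f)}
      = {\<sigma>. \<sigma> permutes {..<length f} \<and> permute_list \<sigma> f = rev (sort f)}"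
  proof safe
    fix \<sigma> assume "\<sigma> permutes {..<length f}" "sorted_wrt (\<ge>) (permute_list \<sigma> f)"
    thus "permute_list \<sigma> f = rev (sort f)" by (intro sorted_desc_unique) simp_all
  next
    fix \<sigma> assume "\<sigma> permutes {..<length f}" "permute_list \<sigma> f = rev (sort f)"
    thus "sorted_wrt (\<ge>) (permute_list \<sigma> f)" using sorted_sort[of f] by (simp add: sorted_wrt_rev)
  qed
  also have "card \<dots> = card {\<tau>. \<tau> permutes {..<length f} \<and> permute_list \<tau> f = f}"
    by (rule stab_card_eq) simp
  also have "\<dots> = (\<Prod>x\<in>set f. fact (count (mset f) x))" by (rule stab_card)
  finally show ?thesis .
qed

definition Fl :: "nat \<Rightarrow> nat \<Rightarrow> nat list set" where
  "Fl h n = {f. length f = n \<and> (\<forall>m\<in>set f. 0 < m \<and> m < h)}"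

lemma finite_Fl: "finite (Fl h n)"
proof -
  have "Fl h n \<subseteq> {ms. set ms \<subseteq> {0..<h} \<and> length ms = n}" by (auto simp: Fl_def)
  thus ?thesis by (rule finite_subset) (rule finite_lists_length_eq, simp)
qed

lemma wt_permute:
  assumes "\<sigma> permutes {..<length ks}" "length f = length ks"
  shows "wt (permute_list \<sigma> ks) (permute_list \<sigma> f) = wt ks f"
proof -
  have "wt (permute_list \<sigma> ks) (permute_list \<sigma> f) = (\<Prod>i<length ks. 1 / real (f ! \<sigma> i) ^ (ks ! \<sigma> i))"
    unfolding wt_def length_permute_list
  proof (intro prod.cong refl)
    fix i assume i: "i \<in> {..<length ks}"
    have "\<sigma> permutes {..<length f}" using assms by simp
    thus "1 / real (permute_list \<sigma> f ! i) ^ (permute_list \<sigma> ks ! i) = 1 / real (f ! \<sigma> i) ^ (ks ! \<sigma> i)"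
      using permute_list_nth[of \<sigma> f i] permute_list_nth[of \<sigma> ks i] assms i by simp
  qed
  also have "\<dots> = (\<Prod>i<length ks. 1 / real (f ! i) ^ (ks ! i))"
    using prod.permute[OF assms(1), of "\<lambda>i. 1 / real (f ! i) ^ (ks ! i)"] by (simp add: comp_def)
  finally show ?thesis by (simp add: wt_def)
qed

lemma ZW_perm:
  assumes "\<sigma> permutes {..<length ks}"
  shows "ZW t h (permute_list \<sigma> ks) = (\<Sum>f\<in>Fl h (length ks).
     if sorted_wrt (\<ge>) (permute_list \<sigma> f) then t ^ (length ks - card (set f)) * wt ks f else 0)"
proof -
  let ?n = "length ks"
  let ?S = "{f\<in>Fl h ?n. sorted_wrt (\<ge>) (permute_list \<sigma> f)}"
  have bij: "bij_betw (permute_list \<sigma>) ?S (SW h ?n)"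
  proof (rule bij_betw_byWitness[where f'="permute_list (inv \<sigma>)"])
    show "\<forall>a\<in>?S. permute_list (inv \<sigma>) (permute_list \<sigma> a) = a"
      using assms by (auto simp: Fl_def intro!: permute_list_inv_cancel)
    show "\<forall>a\<in>SW h ?n. permute_list \<sigma> (permute_list (inv \<sigma>) a) = a"
      using assms by (auto simp: SW_def intro!: permute_list_cancel_inv)
    show "permute_list \<sigma> ` ?S \<subseteq> SW h ?n"
      using assms by (auto simp: Fl_def SW_def)
    show "permute_list (inv \<sigma>) ` SW h ?n \<subseteq> ?S"
    proof (rule image_subsetI)
      fix g assume g: "g \<in> SW h ?n"
      have pi: "inv \<sigma> permutes {..<length g}" using g permutes_inv[OF assms] by (simp add: SW_def)
      have "permute_list \<sigma> (permute_list (inv \<sigma>) g) = g"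
        using g assms by (intro permute_list_cancel_inv) (simp add: SW_def)
      thus "permute_list (inv \<sigma>) g \<in> ?S" using g pi by (auto simp: SW_def Fl_def)
    qed
  qed
  have "ZW t h (permute_list \<sigma> ks) = (\<Sum>g\<in>SW h ?n. t ^ (?n - card (set g)) * wt (permute_list \<sigma> ks) g)"
    by (simp add: ZW_def)
  also have "\<dots> = (\<Sum>f\<in>?S. t ^ (?n - card (set (permute_list \<sigma> f))) * wt (permute_list \<sigma> ks) (permute_list \<sigma> f))"
    by (rule sum.reindex_bij_betw[OF bij, symmetric])
  also have "\<dots> = (\<Sum>f\<in>?S. t ^ (?n - card (set f)) * wt ks f)"
  proof (intro sum.cong refl)
    fix f assume "f \<in> ?S"
    hence l: "length f = ?n" by (simp add: Fl_def)
    thus "t ^ (?n - card (set (permute_list \<sigma> f))) * wt (permute_list \<sigma> ks) (permute_list \<sigma> f) = t ^ (?n - card (set f)) * wt ks f"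
      using assms wt_permute[OF assms l] by simp
  qed
  also have "\<dots> = (\<Sum>f\<in>Fl h ?n. if sorted_wrt (\<ge>) (permute_list \<sigma> f) then t ^ (?n - card (set f)) * wt ks f else 0)"
    by (rule sum.inter_filter[OF finite_Fl])
  finally show ?thesis .
qed

lemma sum_ZW_perm:
  "(\<Sum>\<sigma>\<in>{\<sigma>. \<sigma> permutes {..<length ks}}. ZW t h (permute_list \<sigma> ks))
   = (\<Sum>f\<in>Fl h (length ks). t ^ (length ks - card (set f)) * wt ks f * real (\<Prod>x\<in>set f. fact (count (mset f) x)))"
proof -
  let ?n = "length ks"
  let ?P = "{\<sigma>. \<sigma> permutes {..<length ks}}"
  have finP: "finite ?P" by (rule finite_permutations) simp
  have "(\<Sum>\<sigma>\<in>?P. ZW t h (permute_list \<sigma> ks)) = (\<Sum>\<sigma>\<in>?P. \<Sum>f\<in>Fl h ?n.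
     if sorted_wrt (\<ge>) (permute_list \<sigma> f) then t ^ (?n - card (set f)) * wt ks f else 0)"
    by (intro sum.cong refl ZW_perm) simp
  also have "\<dots> = (\<Sum>f\<in>Fl h ?n. \<Sum>\<sigma>\<in>?P.
     if sorted_wrt (\<ge>) (permute_list \<sigma> f) then t ^ (?n - card (set f)) * wt ks f else 0)"
    by (rule sum.swap)
  also have "\<dots> = (\<Sum>f\<in>Fl h ?n. t ^ (?n - card (set f)) * wt ks f * real (\<Prod>x\<in>set f. fact (count (mset f) x)))"
  proof (intro sum.cong refl)
    fix f assume "f \<in> Fl h ?n"
    hence l: "length f = ?n" by (simp add: Fl_def)
    have "(\<Sum>\<sigma>\<in>?P. if sorted_wrt (\<ge>) (permute_list \<sigma> f) then t ^ (?n - card (set f)) * wt ks f else 0)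
        = (\<Sum>\<sigma>\<in>{\<sigma>\<in>?P. sorted_wrt (\<ge>) (permute_list \<sigma> f)}. t ^ (?n - card (set f)) * wt ks f)"
      by (rule sum.inter_filter[OF finP, symmetric])
    also have "\<dots> = real (card {\<sigma>\<in>?P. sorted_wrt (\<ge>) (permute_list \<sigma> f)}) * (t ^ (?n - card (set f)) * wt ks f)"
      by simp
    also have "card {\<sigma>\<in>?P. sorted_wrt (\<ge>) (permute_list \<sigma> f)} = (\<Prod>x\<in>set f. fact (count (mset f) x))"
      using sort_card[of f] l by simp
    finally show "(\<Sum>\<sigma>\<in>?P. if sorted_wrt (\<ge>) (permute_list \<sigma> f) then t ^ (?n - card (set f)) * wt ks f else 0)
        = t ^ (?n - card (set f)) * wt ks f * real (\<Prod>x\<in>set f. fact (count (mset f) x))"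
      by simp
  qed
  finally show ?thesis .
qed

definition cst :: "nat set set \<Rightarrow> nat list \<Rightarrow> bool" where
  "cst P f = (\<forall>B\<in>P. \<forall>i\<in>B. \<forall>j\<in>B. f ! i = f ! j)"

definition blk :: "nat set set \<Rightarrow> nat \<Rightarrow> nat set" where
  "blk P l = (THE B. B \<in> P \<and> l \<in> B)"

lemma blk:
  assumes "partition_on I P" "l \<in> I"
  shows "blk P l \<in> P" "l \<in> blk P l"
proof -
  have ex: "\<exists>B. B \<in> P \<and> l \<in> B" using partition_onD1[OF assms(1)] assms(2) by auto
  have un: "B = B'" if "B \<in> P" "l \<in> B" "B' \<in> P" "l \<in> B'" for B B'
    using partition_onD2[OF assms(1)] that by (auto simp: disjoint_def)
  have "blk P l \<in> P \<and> l \<in> blk P l"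
    unfolding blk_def by (rule theI') (use ex un in blast)
  thus "blk P l \<in> P" "l \<in> blk P l" by auto
qed

lemma blk_eq:
  assumes "partition_on I P" "B \<in> P" "l \<in> B"
  shows "blk P l = B"
proof -
  have lI: "l \<in> I" using partition_onD1[OF assms(1)] assms by auto
  show ?thesis
    using blk[OF assms(1) lI] partition_onD2[OF assms(1)] assms(2,3) by (auto simp: disjoint_def)
qed

lemma TS_single: "TS h [K] = (\<Sum>m\<in>{0<..<h}. 1 / real m ^ K)"
  by (simp add: TS_Cons TS_Nil)

lemma prod_TS_blocks:
  assumes P: "partition_on {..<length ks} P"
  shows "(\<Prod>B\<in>P. TS h [\<Sum>l\<in>B. ks ! l]) = (\<Sum>f\<in>Fl h (length ks). if cst P f then wt ks f else 0)"
proof -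
  let ?n = "length ks"
  let ?I = "{..<length ks}"
  let ?V = "{0<..<h}"
  let ?C = "{f\<in>Fl h ?n. cst P f}"
  have finP: "finite P" using finite_elements[OF _ P] by simp
  have Pne: "B \<noteq> {}" if "B \<in> P" for B using partition_onD3[OF P] that by auto
  have PsubI: "B \<subseteq> ?I" if "B \<in> P" for B using partition_onD1[OF P] that by auto
  define \<Phi> where "\<Phi> g = map (\<lambda>l. g (blk P l)) [0..<?n]" for g :: "nat set \<Rightarrow> nat"
  define \<Psi> where "\<Psi> f = (\<lambda>B\<in>P. f ! (SOME l. l \<in> B))" for f :: "nat list"
  have some: "(SOME l. l \<in> B) \<in> B" if "B \<in> P" for B using Pne[OF that] by (simp add: some_in_eq)
  have bij: "bij_betw \<Phi> (PiE P (\<lambda>_. ?V)) ?C"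
  proof (rule bij_betw_byWitness[where f'=\<Psi>])
    show "\<forall>g\<in>PiE P (\<lambda>_. ?V). \<Psi> (\<Phi> g) = g"
    proof
      fix g assume g: "g \<in> PiE P (\<lambda>_. ?V)"
      show "\<Psi> (\<Phi> g) = g"
      proof
        fix B show "\<Psi> (\<Phi> g) B = g B"
        proof (cases "B \<in> P")
          case True
          have s: "(SOME l. l \<in> B) \<in> B" by (rule some[OF True])
          have lt: "(SOME l. l \<in> B) < ?n" using s PsubI[OF True] by auto
          show ?thesis using True s lt blk_eq[OF P True s] by (simp add: \<Psi>_def \<Phi>_def)
        next
          case False thus ?thesis using g by (simp add: \<Psi>_def PiE_def extensional_def)
        qed
      qed
    qed
    show "\<forall>f\<in>?C. \<Phi> (\<Psi> f) = f"
    proof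
      fix f assume f: "f \<in> ?C"
      hence len: "length f = ?n" by (simp add: Fl_def)
      show "\<Phi> (\<Psi> f) = f"
      proof (rule nth_equalityI)
        show "length (\<Phi> (\<Psi> f)) = length f" using len by (simp add: \<Phi>_def)
        fix l assume "l < length (\<Phi> (\<Psi> f))"
        hence l: "l < ?n" by (simp add: \<Phi>_def)
        have b: "blk P l \<in> P" "l \<in> blk P l" using blk[OF P] l by auto
        have "f ! (SOME l'. l' \<in> blk P l) = f ! l"
          using f some[OF b(1)] b unfolding cst_def by blast
        thus "\<Phi> (\<Psi> f) ! l = f ! l" using l b by (simp add: \<Phi>_def \<Psi>_def)
      qed
    qed
    show "\<Phi> ` PiE P (\<lambda>_. ?V) \<subseteq> ?C"
    proof (rule image_subsetI)
      fix g assume g: "g \<in> PiE P (\<lambda>_. ?V)"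
      have "\<forall>m\<in>set (\<Phi> g). 0 < m \<and> m < h"
        using g blk[OF P] by (force simp: \<Phi>_def PiE_def)
      moreover have "cst P (\<Phi> g)"
        unfolding cst_def
      proof (intro ballI)
        fix B i j assume "B \<in> P" "i \<in> B" "j \<in> B"
        hence "i < ?n" "j < ?n" using PsubI by auto
        thus "\<Phi> g ! i = \<Phi> g ! j" using blk_eq[OF P \<open>B \<in> P\<close> \<open>i \<in> B\<close>] blk_eq[OF P \<open>B \<in> P\<close> \<open>j \<in> B\<close>]
          by (simp add: \<Phi>_def)
      qed
      ultimately show "\<Phi> g \<in> ?C" by (simp add: Fl_def \<Phi>_def)
    qed
    show "\<Psi> ` ?C \<subseteq> PiE P (\<lambda>_. ?V)"
    proof (rule image_subsetI)
      fix f assume f: "f \<in> ?C"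
      have "f ! (SOME l. l \<in> B) \<in> ?V" if "B \<in> P" for B
      proof -
        have "(SOME l. l \<in> B) < length f" using some[OF that] PsubI[OF that] f by (auto simp: Fl_def)
        hence "f ! (SOME l. l \<in> B) \<in> set f" by simp
        thus ?thesis using f by (auto simp: Fl_def)
      qed
      thus "\<Psi> f \<in> PiE P (\<lambda>_. ?V)" by (auto simp: \<Psi>_def)
    qed
  qed
  have "(\<Prod>B\<in>P. TS h [\<Sum>l\<in>B. ks ! l]) = (\<Prod>B\<in>P. \<Sum>m\<in>?V. 1 / real m ^ (\<Sum>l\<in>B. ks ! l))"
    by (simp add: TS_single)
  also have "\<dots> = (\<Sum>g\<in>PiE P (\<lambda>_. ?V). \<Prod>B\<in>P. 1 / real (g B) ^ (\<Sum>l\<in>B. ks ! l))"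
    by (rule prod_sum_PiE) (auto simp: finP)
  also have "\<dots> = (\<Sum>g\<in>PiE P (\<lambda>_. ?V). wt ks (\<Phi> g))"
  proof (intro sum.cong refl)
    fix g assume g: "g \<in> PiE P (\<lambda>_. ?V)"
    have "(\<Prod>B\<in>P. 1 / real (g B) ^ (\<Sum>l\<in>B. ks ! l)) = (\<Prod>B\<in>P. \<Prod>l\<in>B. 1 / real (\<Phi> g ! l) ^ (ks ! l))"
    proof (intro prod.cong refl)
      fix B assume B: "B \<in> P"
      have "1 / real (g B) ^ (\<Sum>l\<in>B. ks ! l) = (1 / real (g B)) ^ (\<Sum>l\<in>B. ks ! l)"
        by (simp add: power_one_over)
      also have "\<dots> = (\<Prod>l\<in>B. (1 / real (g B)) ^ (ks ! l))" by (rule power_sum)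
      also have "\<dots> = (\<Prod>l\<in>B. 1 / real (\<Phi> g ! l) ^ (ks ! l))"
      proof (intro prod.cong refl)
        fix l assume l: "l \<in> B"
        have "l < ?n" using PsubI[OF B] l by auto
        thus "(1 / real (g B)) ^ (ks ! l) = 1 / real (\<Phi> g ! l) ^ (ks ! l)"
          using blk_eq[OF P B l] by (simp add: \<Phi>_def power_one_over)
      qed
      finally show "1 / real (g B) ^ (\<Sum>l\<in>B. ks ! l) = (\<Prod>l\<in>B. 1 / real (\<Phi> g ! l) ^ (ks ! l))" .
    qed
    also have "\<dots> = (\<Prod>l\<in>?I. 1 / real (\<Phi> g ! l) ^ (ks ! l))"
      by (rule prod.partition[OF _ P, symmetric]) simp
    also have "\<dots> = wt ks (\<Phi> g)" by (simp add: wt_def)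
    finally show "(\<Prod>B\<in>P. 1 / real (g B) ^ (\<Sum>l\<in>B. ks ! l)) = wt ks (\<Phi> g)" .
  qed
  also have "\<dots> = (\<Sum>f\<in>?C. wt ks f)"
    by (rule sum.reindex_bij_betw[OF bij, of "wt ks"])
  also have "\<dots> = (\<Sum>f\<in>Fl h ?n. if cst P f then wt ks f else 0)"
    by (rule sum.inter_filter[OF finite_Fl])
  finally show ?thesis .
qed

definition uu :: "real \<Rightarrow> nat \<Rightarrow> real" where
  "uu t j = t ^ Suc j - (t - 1) ^ Suc j"

definition phi :: "real \<Rightarrow> nat \<Rightarrow> real" where
  "phi t m = t ^ (m - 1) * fact m"

lemma numid: "(\<Sum>j<a. uu t j * t ^ (a - Suc j)) + uu t a = real (Suc a) * t ^ a"
proof (induction a)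
  case 0 thus ?case by (simp add: uu_def)
next
  case (Suc a)
  have "(\<Sum>j<Suc a. uu t j * t ^ (Suc a - Suc j)) = (\<Sum>j<a. uu t j * t ^ (a - j)) + uu t a"
    by simp
  also have "(\<Sum>j<a. uu t j * t ^ (a - j)) = t * (\<Sum>j<a. uu t j * t ^ (a - Suc j))"
    unfolding sum_distrib_left
  proof (intro sum.cong refl)
    fix j assume "j \<in> {..<a}"
    hence "a - j = Suc (a - Suc j)" by simp
    thus "uu t j * t ^ (a - j) = t * (uu t j * t ^ (a - Suc j))" by simp
  qed
  also have "(\<Sum>j<a. uu t j * t ^ (a - Suc j)) = real (Suc a) * t ^ a - uu t a" using Suc by simp
  finally have "(\<Sum>j<Suc a. uu t j * t ^ (Suc a - Suc j)) + uu t (Suc a)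
      = t * (real (Suc a) * t ^ a - uu t a) + uu t a + uu t (Suc a)" by simp
  also have "\<dots> = real (Suc (Suc a)) * t ^ Suc a"
    by (simp add: uu_def algebra_simps)
  finally show ?case .
qed

lemma numid2:
  "(\<Sum>j\<le>a. real (a choose j) * c_coef (Suc j) t * phi t (a - j)) = phi t (Suc a)"
proof -
  have "(\<Sum>j\<le>a. real (a choose j) * c_coef (Suc j) t * phi t (a - j))
      = (\<Sum>j\<le>a. fact a * (uu t j * t ^ (a - Suc j)))"
  proof (intro sum.cong refl)
    fix j assume "j \<in> {..a}"
    hence j: "j \<le> a" by simp
    have f: "real (fact j) * real (fact (a - j)) * real (a choose j) = fact a"
      using binomial_fact_lemma[OF j] by (metis of_nat_fact of_nat_mult)
    have e: "a - j - 1 = a - Suc j" by simp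
    have "real (a choose j) * c_coef (Suc j) t * phi t (a - j)
        = (real (fact j) * real (fact (a - j)) * real (a choose j)) * (uu t j * t ^ (a - Suc j))"
      by (simp add: c_coef_def phi_def uu_def e)
    also have "\<dots> = fact a * (uu t j * t ^ (a - Suc j))" using f by simp
    finally show "real (a choose j) * c_coef (Suc j) t * phi t (a - j) = fact a * (uu t j * t ^ (a - Suc j))" .
  qed
  also have "\<dots> = fact a * ((\<Sum>j<a. uu t j * t ^ (a - Suc j)) + uu t a)"
    by (simp add: sum_distrib_left lessThan_Suc_atMost[symmetric] algebra_simps)
  also have "\<dots> = fact a * (real (Suc a) * t ^ a)" by (simp add: numid)
  also have "\<dots> = phi t (Suc a)" by (simp add: phi_def)
  finally show ?thesis .
qed

definition cstg :: "('a \<Rightarrow> 'b) \<Rightarrow> 'a set set \<Rightarrow> bool" where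
  "cstg g P = (\<forall>B\<in>P. \<forall>i\<in>B. \<forall>j\<in>B. g i = g j)"

definition Rs :: "real \<Rightarrow> ('a \<Rightarrow> 'b) \<Rightarrow> 'a set \<Rightarrow> real" where
  "Rs t g J = (\<Sum>P\<in>{P. partition_on J P \<and> cstg g P}. \<Prod>B\<in>P. c_coef (card B) t)"

lemma Rs_insert:
  assumes fin: "finite J" and x: "x \<notin> J"
  shows "Rs t g (insert x J) = (\<Sum>S\<in>{S. S \<subseteq> J \<and> (\<forall>i\<in>S. g i = g x)}. c_coef (Suc (card S)) t * Rs t g (J - S))"
proof -
  let ?Subs = "{S. S \<subseteq> J \<and> (\<forall>i\<in>S. g i = g x)}"
  let ?Q = "\<lambda>S. {Q. partition_on (J - S) Q \<and> cstg g Q}"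
  let ?Sig = "SIGMA S:?Subs. ?Q S"
  let ?ins = "\<lambda>(S, Q). insert (insert x S) Q"
  let ?w = "\<lambda>P. \<Prod>B\<in>P. c_coef (card B) t"
  have finSubs: "finite ?Subs" by (rule finite_subset[of _ "Pow J"]) (use fin in auto)
  have finQ: "finite (?Q S)" for S
    by (rule finite_subset[OF _ finitely_many_partition_on[of "J - S"]]) (use fin in auto)
  have finQQ: "finite Q" if "Q \<in> ?Q S" for Q S
    using that fin by (intro finite_elements[of "J - S"]) auto
  have UQ: "\<Union>Q = J - S" if "Q \<in> ?Q S" for Q S
    using that partition_onD1 by auto
  have notin: "insert x S \<notin> Q" if "Q \<in> ?Q S" for Q S
    using UQ[OF that] x by auto
  have inj: "inj_on ?ins ?Sig"
  proof (rule inj_onI)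
    fix p p' assume p: "p \<in> ?Sig" and p': "p' \<in> ?Sig" and eq0: "?ins p = ?ins p'"
    obtain S Q where pSQ: "p = (S, Q)" by (cases p)
    obtain S' Q' where pSQ': "p' = (S', Q')" by (cases p')
    have a: "S \<in> ?Subs" "Q \<in> ?Q S" "S' \<in> ?Subs" "Q' \<in> ?Q S'" using p p' pSQ pSQ' by auto
    have eq: "insert (insert x S) Q = insert (insert x S') Q'" using eq0 pSQ pSQ' by simp
    have xQ: "\<forall>B\<in>Q. x \<notin> B" using UQ[OF a(2)] x by auto
    have xQ': "\<forall>B\<in>Q'. x \<notin> B" using UQ[OF a(4)] x by auto
    have "insert x S = insert x S'"
    proof -
      have "insert x S \<in> insert (insert x S') Q'" using eq by blast
      thus ?thesis using xQ' by auto
    qed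
    moreover have "x \<notin> S" "x \<notin> S'" using x a(1,3) by auto
    ultimately have S: "S = S'" by (metis Diff_insert_absorb)
    have "Q = insert (insert x S) Q - {insert x S}" using notin[OF a(2)] by auto
    also have "\<dots> = insert (insert x S') Q' - {insert x S'}" using eq S by simp
    also have "\<dots> = Q'" using notin[OF a(4)] by auto
    finally show "p = p'" using S pSQ pSQ' by simp
  qed
  have img: "?ins ` ?Sig = {P. partition_on (insert x J) P \<and> cstg g P}"
  proof (intro equalityI subsetI)
    fix P assume "P \<in> ?ins ` ?Sig"
    then obtain S Q where S: "S \<in> ?Subs" and Q: "Q \<in> ?Q S" and P: "P = insert (insert x S) Q" by auto
    have d: "disjnt (insert x S) (\<Union>Q)" using UQ[OF Q] x by (auto simp: disjnt_def)
    have e: "insert x J - insert x S = J - S" using x by auto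
    have "partition_on (insert x J - insert x S) Q" using Q unfolding e by simp
    moreover have "insert x S \<subseteq> insert x J" using S by auto
    ultimately have "partition_on (insert x J) P" unfolding P using partition_on_insert[OF d] by blast
    moreover have "cstg g P"
    proof -
      have cQ: "cstg g Q" using Q by simp
      have "\<forall>i\<in>insert x S. \<forall>j\<in>insert x S. g i = g j" using S by auto
      thus ?thesis using cQ unfolding P cstg_def by blast
    qed
    ultimately show "P \<in> {P. partition_on (insert x J) P \<and> cstg g P}" by simp
  next
    fix P assume "P \<in> {P. partition_on (insert x J) P \<and> cstg g P}"
    hence P: "partition_on (insert x J) P" and c: "cstg g P" by auto
    obtain B where B: "B \<in> P" "x \<in> B" using partition_onD1[OF P] by auto
    define Q where "Q = P - {B}"
    have PQ: "P = insert B Q" using B by (auto simp: Q_def)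
    have dC: "disjnt B C" if "C \<in> Q" for C
      using partition_onD2[OF P] B(1) that unfolding Q_def pairwise_def by blast
    hence d: "disjnt B (\<Union>Q)" unfolding disjnt_def by blast
    have pQ: "partition_on (insert x J - B) Q" "B \<subseteq> insert x J"
      using P unfolding PQ partition_on_insert[OF d] by auto
    define S where "S = B - {x}"
    have BS: "B = insert x S" using B by (auto simp: S_def)
    have cB: "\<forall>i\<in>B. \<forall>j\<in>B. g i = g j" using c B(1) unfolding cstg_def by blast
    have "S \<subseteq> J" using pQ(2) unfolding S_def by blast
    moreover have "\<forall>i\<in>S. g i = g x" using cB B(2) unfolding S_def by blast
    ultimately have S: "S \<in> ?Subs" by blast
    have "insert x J - B = J - S" using x BS by auto
    moreover have "cstg g Q" using c unfolding cstg_def Q_def by blast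
    ultimately have "Q \<in> ?Q S" using pQ(1) by simp
    thus "P \<in> ?ins ` ?Sig" using S PQ BS by (auto intro!: image_eqI[of _ _ "(S, Q)"])
  qed
  have "(\<Sum>S\<in>?Subs. c_coef (Suc (card S)) t * Rs t g (J - S))
      = (\<Sum>S\<in>?Subs. \<Sum>Q\<in>?Q S. c_coef (Suc (card S)) t * ?w Q)"
    by (simp add: Rs_def sum_distrib_left)
  also have "\<dots> = (\<Sum>(S, Q)\<in>?Sig. c_coef (Suc (card S)) t * ?w Q)"
    by (rule sum.Sigma) (use finSubs finQ in auto)
  also have "\<dots> = (\<Sum>(S, Q)\<in>?Sig. ?w (insert (insert x S) Q))"
  proof (rule sum.cong[OF refl])
    fix p assume p: "p \<in> ?Sig"
    obtain S Q where pSQ: "p = (S, Q)" by (cases p)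
    have S: "S \<in> ?Subs" and Q: "Q \<in> ?Q S" using p pSQ by auto
    have "finite S" using S fin finite_subset by auto
    moreover have "x \<notin> S" using S x by auto
    ultimately have "card (insert x S) = Suc (card S)" by simp
    thus "(case p of (S, Q) \<Rightarrow> c_coef (Suc (card S)) t * ?w Q) = (case p of (S, Q) \<Rightarrow> ?w (insert (insert x S) Q))"
      unfolding pSQ using finQQ[OF Q] notin[OF Q] by simp
  qed
  also have "\<dots> = sum ?w (?ins ` ?Sig)"
    by (subst sum.reindex[OF inj]) (simp add: case_prod_unfold)
  also have "\<dots> = Rs t g (insert x J)" unfolding img Rs_def ..
  finally show ?thesis ..
qed

lemma sum_subsets_card:
  assumes "finite F"
  shows "(\<Sum>S\<in>{S. S \<subseteq> F}. h (card S)) = (\<Sum>j\<le>card F. real (card F choose j) * (h j :: real))"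
proof -
  have fin: "finite {S. S \<subseteq> F}" using assms by simp
  have img: "card ` {S. S \<subseteq> F} \<subseteq> {..card F}" using assms by (auto intro: card_mono)
  have "(\<Sum>S\<in>{S. S \<subseteq> F}. h (card S)) = (\<Sum>j\<le>card F. \<Sum>S\<in>{S \<in> {S. S \<subseteq> F}. card S = j}. h (card S))"
    by (rule sum.group[OF fin _ img, symmetric]) simp
  also have "\<dots> = (\<Sum>j\<le>card F. real (card F choose j) * h j)"
  proof (intro sum.cong refl)
    fix j
    have "(\<Sum>S\<in>{S \<in> {S. S \<subseteq> F}. card S = j}. h (card S)) = (\<Sum>S\<in>{S. S \<subseteq> F \<and> card S = j}. h j)"
      by (intro sum.cong) auto
    also have "\<dots> = real (card {S. S \<subseteq> F \<and> card S = j}) * h j" by simp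
    also have "card {S. S \<subseteq> F \<and> card S = j} = card F choose j" by (rule n_subsets[OF assms])
    finally show "(\<Sum>S\<in>{S \<in> {S. S \<subseteq> F}. card S = j}. h (card S)) = real (card F choose j) * h j" .
  qed
  finally show ?thesis .
qed

lemma Rs_empty: "Rs t g {} = 1"
proof -
  have "{P. partition_on {} P \<and> cstg g P} = {{}}" by (auto simp: partition_on_empty cstg_def)
  thus ?thesis by (simp add: Rs_def)
qed

lemma Rs_formula:
  assumes "finite J" "finite Vs" "g ` J \<subseteq> Vs"
  shows "Rs t g J = (\<Prod>v\<in>Vs. phi t (card {i\<in>J. g i = v}))"
  using assms
proof (induction "card J" arbitrary: J rule: less_induct)
  case less
  show ?case
  proof (cases "J = {}")
    case True
    thus ?thesis by (simp add: Rs_empty phi_def)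
  next
    case False
    then obtain x where xJ: "x \<in> J" by blast
    define J' where "J' = J - {x}"
    have J: "J = insert x J'" and x: "x \<notin> J'" using xJ by (auto simp: J'_def)
    have finJ': "finite J'" using less.prems by (simp add: J'_def)
    define v0 where "v0 = g x"
    have v0: "v0 \<in> Vs" using less.prems xJ by (auto simp: v0_def)
    define F where "F = {i\<in>J'. g i = v0}"
    have finF: "finite F" using finJ' by (simp add: F_def)
    have Subs: "{S. S \<subseteq> J' \<and> (\<forall>i\<in>S. g i = g x)} = {S. S \<subseteq> F}"
      by (auto simp: F_def v0_def)
    define Oth where "Oth = (\<Prod>v\<in>Vs - {v0}. phi t (card {i\<in>J'. g i = v}))"
    have "Rs t g J = (\<Sum>S\<in>{S. S \<subseteq> F}. c_coef (Suc (card S)) t * Rs t g (J' - S))"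
      unfolding J using Rs_insert[OF finJ' x, of t g] Subs by simp
    also have "\<dots> = (\<Sum>S\<in>{S. S \<subseteq> F}. c_coef (Suc (card S)) t * phi t (card F - card S) * Oth)"
    proof (intro sum.cong refl)
      fix S assume "S \<in> {S. S \<subseteq> F}"
      hence SF: "S \<subseteq> F" by simp
      have finS: "finite S" using finF SF finite_subset by blast
      have lt: "card (J' - S) < card J"
      proof -
        have "card (J' - S) \<le> card J'" using finJ' by (rule card_mono) auto
        also have "\<dots> < card J" unfolding J using finJ' x by simp
        finally show ?thesis .
      qed
      have f1: "finite (J' - S)" using finJ' by simp
      have f2: "g ` (J' - S) \<subseteq> Vs" using less.prems(3) unfolding J by auto
      have "Rs t g (J' - S) = (\<Prod>v\<in>Vs. phi t (card {i\<in>J' - S. g i = v}))"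
        by (rule less.hyps[OF lt f1 less.prems(2) f2])
      also have "\<dots> = phi t (card {i\<in>J' - S. g i = v0}) * (\<Prod>v\<in>Vs - {v0}. phi t (card {i\<in>J' - S. g i = v}))"
        using less.prems(2) v0 by (rule prod.remove)
      also have "{i\<in>J' - S. g i = v0} = F - S" by (auto simp: F_def)
      also have "card (F - S) = card F - card S" using finS SF by (rule card_Diff_subset)
      also have "(\<Prod>v\<in>Vs - {v0}. phi t (card {i\<in>J' - S. g i = v})) = Oth"
        unfolding Oth_def
      proof (intro prod.cong refl)
        fix v assume "v \<in> Vs - {v0}"
        hence "{i\<in>J' - S. g i = v} = {i\<in>J'. g i = v}" using SF by (auto simp: F_def)
        thus "phi t (card {i\<in>J' - S. g i = v}) = phi t (card {i\<in>J'. g i = v})" by simp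
      qed
      finally show "c_coef (Suc (card S)) t * Rs t g (J' - S) = c_coef (Suc (card S)) t * phi t (card F - card S) * Oth"
        by simp
    qed
    also have "\<dots> = (\<Sum>S\<in>{S. S \<subseteq> F}. c_coef (Suc (card S)) t * phi t (card F - card S)) * Oth"
      by (simp add: sum_distrib_right)
    also have "(\<Sum>S\<in>{S. S \<subseteq> F}. c_coef (Suc (card S)) t * phi t (card F - card S))
        = (\<Sum>j\<le>card F. real (card F choose j) * (c_coef (Suc j) t * phi t (card F - j)))"
      by (rule sum_subsets_card[OF finF])
    also have "\<dots> = phi t (Suc (card F))"
      using numid2[of "card F" t] by (simp add: mult.assoc)
    also have "phi t (Suc (card F)) * Oth = (\<Prod>v\<in>Vs. phi t (card {i\<in>J. g i = v}))"
    proof -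
      have "(\<Prod>v\<in>Vs. phi t (card {i\<in>J. g i = v})) = phi t (card {i\<in>J. g i = v0}) * (\<Prod>v\<in>Vs - {v0}. phi t (card {i\<in>J. g i = v}))"
        using less.prems(2) v0 by (rule prod.remove)
      also have "{i\<in>J. g i = v0} = insert x F" unfolding J by (auto simp: F_def v0_def)
      also have "card (insert x F) = Suc (card F)" using finF x by (simp add: F_def)
      also have "(\<Prod>v\<in>Vs - {v0}. phi t (card {i\<in>J. g i = v})) = Oth"
        unfolding Oth_def
      proof (intro prod.cong refl)
        fix v assume "v \<in> Vs - {v0}"
        hence "{i\<in>J. g i = v} = {i\<in>J'. g i = v}" unfolding J by (auto simp: v0_def)
        thus "phi t (card {i\<in>J. g i = v}) = phi t (card {i\<in>J'. g i = v})" by simp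
      qed
      finally show ?thesis by simp
    qed
    finally show ?thesis .
  qed
qed

lemma count_mset_card: "count (mset f) v = card {i\<in>{..<length f}. f ! i = v}"
proof -
  have "count (mset f) v = length (filter (\<lambda>x. v = x) f)"
    by (simp add: count_mset count_list_eq_length_filter)
  also have "\<dots> = card {i. i < length f \<and> v = f ! i}" by (rule length_filter_conv_card)
  also have "{i. i < length f \<and> v = f ! i} = {i\<in>{..<length f}. f ! i = v}" by auto
  finally show ?thesis .
qed

lemma Rs_list:
  "Rs t (\<lambda>i. f ! i) {..<length f} = t ^ (length f - card (set f)) * real (\<Prod>v\<in>set f. fact (count (mset f) v))"
proof -
  have "Rs t (\<lambda>i. f ! i) {..<length f} = (\<Prod>v\<in>set f. phi t (card {i\<in>{..<length f}. f ! i = v}))"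
    by (rule Rs_formula) (auto)
  also have "\<dots> = (\<Prod>v\<in>set f. t ^ (count (mset f) v - 1) * fact (count (mset f) v))"
    by (simp add: phi_def count_mset_card)
  also have "\<dots> = (\<Prod>v\<in>set f. t ^ (count (mset f) v - 1)) * (\<Prod>v\<in>set f. fact (count (mset f) v))"
    by (rule prod.distrib)
  also have "(\<Prod>v\<in>set f. t ^ (count (mset f) v - 1)) = t ^ (\<Sum>v\<in>set f. (count (mset f) v - 1))"
    by (simp add: power_sum)
  also have "(\<Sum>v\<in>set f. (count (mset f) v - 1)) = length f - card (set f)"
  proof -
    have s: "(\<Sum>v\<in>set f. count (mset f) v) = length f"
      using size_multiset_overloaded_eq[of "mset f"] by simp
    have ge: "\<forall>v\<in>set f. count (mset f) v \<ge> 1" by simp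
    have "(\<Sum>v\<in>set f. (count (mset f) v - 1)) + card (set f) = (\<Sum>v\<in>set f. count (mset f) v)"
    proof -
      have "(\<Sum>v\<in>set f. (count (mset f) v - 1)) + card (set f) = (\<Sum>v\<in>set f. (count (mset f) v - 1) + 1)"
        by (simp only: sum.distrib) simp
      also have "\<dots> = (\<Sum>v\<in>set f. count (mset f) v)"
        using ge by (intro sum.cong refl) simp
      finally show ?thesis .
    qed
    thus ?thesis using s by simp
  qed
  finally show ?thesis by simp
qed

lemma tendsto_sum_list_seq:
  assumes "\<And>x. x \<in> set xs \<Longrightarrow> ((\<lambda>N. F N x) \<longlongrightarrow> G x) sequentially"
  shows "((\<lambda>N. \<Sum>x\<leftarrow>xs. F N x) \<longlongrightarrow> (\<Sum>x\<leftarrow>xs. (G x :: real))) sequentially"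
  using assms
proof (induction xs)
  case Nil thus ?case by simp
next
  case (Cons a xs)
  have "((\<lambda>N. F N a + (\<Sum>x\<leftarrow>xs. F N x)) \<longlongrightarrow> G a + (\<Sum>x\<leftarrow>xs. G x)) sequentially"
    using Cons by (intro tendsto_add) auto
  thus ?case by simp
qed

lemma finite_identity:
  "(\<Sum>\<sigma>\<in>{\<sigma>. \<sigma> permutes {..<length ks}}. ZW t h (permute_list \<sigma> ks))
   = (\<Sum>P\<in>{P. partition_on {..<length ks} P}. (\<Prod>B\<in>P. c_coef (card B) t) * (\<Prod>B\<in>P. TS h [\<Sum>l\<in>B. ks ! l]))"
proof -
  let ?n = "length ks"
  let ?Ps = "{P. partition_on {..<length ks} P}"
  let ?c = "\<lambda>P. \<Prod>B\<in>P. c_coef (card B) t"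
  have finPs: "finite ?Ps" by (rule finitely_many_partition_on) simp
  have "(\<Sum>P\<in>?Ps. ?c P * (\<Prod>B\<in>P. TS h [\<Sum>l\<in>B. ks ! l]))
      = (\<Sum>P\<in>?Ps. ?c P * (\<Sum>f\<in>Fl h ?n. if cst P f then wt ks f else 0))"
    by (intro sum.cong refl) (simp add: prod_TS_blocks)
  also have "\<dots> = (\<Sum>P\<in>?Ps. \<Sum>f\<in>Fl h ?n. if cst P f then ?c P * wt ks f else 0)"
    by (simp add: sum_distrib_left if_distrib cong: if_cong)
  also have "\<dots> = (\<Sum>f\<in>Fl h ?n. \<Sum>P\<in>?Ps. if cst P f then ?c P * wt ks f else 0)"
    by (rule sum.swap)
  also have "\<dots> = (\<Sum>f\<in>Fl h ?n. t ^ (?n - card (set f)) * wt ks f * real (\<Prod>x\<in>set f. fact (count (mset f) x)))"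
  proof (intro sum.cong refl)
    fix f assume f: "f \<in> Fl h ?n"
    hence len: "length f = ?n" by (simp add: Fl_def)
    have "(\<Sum>P\<in>?Ps. if cst P f then ?c P * wt ks f else 0) = (\<Sum>P\<in>{P\<in>?Ps. cst P f}. ?c P * wt ks f)"
      by (rule sum.inter_filter[OF finPs, symmetric])
    also have "\<dots> = wt ks f * Rs t (\<lambda>i. f ! i) {..<length f}"
    proof -
      have "{P\<in>?Ps. cst P f} = {P. partition_on {..<length f} P \<and> cstg (\<lambda>i. f ! i) P}"
        using len by (auto simp: cst_def cstg_def)
      thus ?thesis by (simp add: Rs_def sum_distrib_left mult.commute)
    qed
    also have "\<dots> = t ^ (?n - card (set f)) * wt ks f * real (\<Prod>x\<in>set f. fact (count (mset f) x))"
      using Rs_list[of t f] len by simp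
    finally show "(\<Sum>P\<in>?Ps. if cst P f then ?c P * wt ks f else 0) = t ^ (?n - card (set f)) * wt ks f * real (\<Prod>x\<in>set f. fact (count (mset f) x))" .
  qed
  also have "\<dots> = (\<Sum>\<sigma>\<in>{\<sigma>. \<sigma> permutes {..<length ks}}. ZW t h (permute_list \<sigma> ks))"
    by (rule sum_ZW_perm[symmetric])
  finally show ?thesis ..
qed

theorem theorem3p2:
  fixes ks :: "nat list" and t :: real
  assumes "\<forall>k\<in>set ks. k \<ge> 2"
  shows "(\<Sum>\<sigma>\<in>{\<sigma>. \<sigma> permutes {0..<length ks}}.
            zeta_t t (map (\<lambda>i. ks ! \<sigma> i) [0..<length ks]))
       = (\<Sum>P\<in>{P. partition_on {0..<length ks} P}.
            (\<Prod>B\<in>P. c_coef (card B) t) * (\<Prod>B\<in>P. mzv [\<Sum>l\<in>B. ks ! l]))"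
proof -
  let ?n = "length ks"
  let ?Sg = "{\<sigma>. \<sigma> permutes {..<length ks}}"
  let ?Ps = "{P. partition_on {..<length ks} P}"
  have e0: "{0..<length ks} = {..<length ks}" by auto
  have mp: "map (\<lambda>i. ks ! \<sigma> i) [0..<length ks] = permute_list \<sigma> ks" for \<sigma>
    by (simp add: permute_list_def)
  have finSg: "finite ?Sg" by (rule finite_permutations) simp
  have finPs: "finite ?Ps" by (rule finitely_many_partition_on) simp
  have L: "(\<lambda>N. \<Sum>\<sigma>\<in>?Sg. ZW t (Suc N) (permute_list \<sigma> ks)) \<longlonglongrightarrow> (\<Sum>\<sigma>\<in>?Sg. zeta_t t (permute_list \<sigma> ks))"
  proof (rule tendsto_sum)
    fix \<sigma> assume "\<sigma> \<in> ?Sg"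
    hence s: "set (permute_list \<sigma> ks) = set ks" by simp
    let ?ks' = "permute_list \<sigma> ks"
    have "(\<lambda>N. \<Sum>p\<leftarrow>merges ?ks'. t ^ (length ?ks' - length p) * TS (Suc N) p)
        \<longlonglongrightarrow> (\<Sum>p\<leftarrow>merges ?ks'. t ^ (length ?ks' - length p) * mzv p)"
    proof (rule tendsto_sum_list_seq)
      fix p assume "p \<in> set (merges ?ks')"
      hence "\<forall>x\<in>set p. x \<ge> 2" using merges_ge2 assms s by blast
      thus "(\<lambda>N. t ^ (length ?ks' - length p) * TS (Suc N) p) \<longlonglongrightarrow> t ^ (length ?ks' - length p) * mzv p"
        by (intro tendsto_mult_left mzv_trunc)
    qed
    moreover have "(\<lambda>N. ZW t (Suc N) ?ks') = (\<lambda>N. \<Sum>p\<leftarrow>merges ?ks'. t ^ (length ?ks' - length p) * TS (Suc N) p)"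
      by (rule ext, rule zeta_trunc[symmetric])
    ultimately show "(\<lambda>N. ZW t (Suc N) ?ks') \<longlonglongrightarrow> zeta_t t ?ks'"
      unfolding zeta_t_def by simp
  qed
  have R: "(\<lambda>N. \<Sum>P\<in>?Ps. (\<Prod>B\<in>P. c_coef (card B) t) * (\<Prod>B\<in>P. TS (Suc N) [\<Sum>l\<in>B. ks ! l]))
        \<longlonglongrightarrow> (\<Sum>P\<in>?Ps. (\<Prod>B\<in>P. c_coef (card B) t) * (\<Prod>B\<in>P. mzv [\<Sum>l\<in>B. ks ! l]))"
  proof (intro tendsto_sum tendsto_mult_left tendsto_prod)
    fix P B assume P: "P \<in> ?Ps" and B: "B \<in> P"
    have Bne: "B \<noteq> {}" using partition_onD3[of _ P] P B by auto
    have BI: "B \<subseteq> {..<?n}" using partition_onD1[of _ P] P B by auto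
    hence finB: "finite B" using finite_subset by blast
    obtain l where l: "l \<in> B" using Bne by blast
    have "ks ! l \<ge> 2" using assms l BI by auto
    also have "ks ! l \<le> (\<Sum>l\<in>B. ks ! l)" using finB l by (intro member_le_sum) auto
    finally have "\<forall>x\<in>set [\<Sum>l\<in>B. ks ! l]. x \<ge> 2" by simp
    thus "(\<lambda>N. TS (Suc N) [\<Sum>l\<in>B. ks ! l]) \<longlonglongrightarrow> mzv [\<Sum>l\<in>B. ks ! l]"
      by (rule mzv_trunc)
  qed
  have eq: "(\<Sum>\<sigma>\<in>?Sg. ZW t (Suc N) (permute_list \<sigma> ks))
     = (\<Sum>P\<in>?Ps. (\<Prod>B\<in>P. c_coef (card B) t) * (\<Prod>B\<in>P. TS (Suc N) [\<Sum>l\<in>B. ks ! l]))" for N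
    by (rule finite_identity)
  have "(\<Sum>\<sigma>\<in>?Sg. zeta_t t (permute_list \<sigma> ks)) = (\<Sum>P\<in>?Ps. (\<Prod>B\<in>P. c_coef (card B) t) * (\<Prod>B\<in>P. mzv [\<Sum>l\<in>B. ks ! l]))"
    using L unfolding eq using R by (rule LIMSEQ_unique)
  thus ?thesis unfolding e0 mp .
qed

end
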